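(* Let $\rho$, $\varepsilon$, $q,\delta$ and $(\sigma,\gamma)$ be as in the context. Let $G\sim N(0,1)$, and for $\eta\in[-1,1]$ let $\tilde G$ be such that $(G,\tilde G)\sim N\big(0_2,\begin{pmatrix}1&\eta\\ \eta&1\end{pmatrix}\big)$ and $(G,\tilde G)$ is independent of $\varepsilon$. Define $$F(\eta)= q\,\frac{\mathbb E\big[\big(\sigma G-\mathrm{prox}_{\gamma\rho_\varepsilon}(\sigma G)\big)\big(\sigma \tilde G-\mathrm{prox}_{\gamma\rho_\varepsilon}(\sigma \tilde G)\big)\big]}{\mathbb E\big[\big(\sigma G-\mathrm{prox}_{\gamma\rho_\varepsilon}(\sigma G)\big)^2\big]},\qquad \eta\in[-1,1].$$ Then $F$ is non-decreasing and $q$-Lipschitz on $[-1,1]$, with $0\le F(0)\le q\le 1$ and $F(1)=q$. The equation $\eta=F(\eta)$ has a unique solution in $[-1,1]$, and this solution lies in $[0,q]$. (Equivalently, by the first equation of the system defining $(\sigma,\gamma)$, $\eta=\frac{q^2\delta}{\sigma^2}\mathbb E[(\sigma G-\mathrm{prox}_{\gamma\rho_\varepsilon}(\sigma G))(\sigma \tilde G-\mathrm{prox}_{\gamma\rho_\varepsilon}(\sigma\tilde G))]$ has a unique solution, lying in $[0,q]$.)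
   Context: Constants $q\in(0,1)$, $\delta>1$ with $q\delta>1$. $\rho:\mathbb R\to\mathbb R$ is twice continuously differentiable, $\arg\min_x\rho(x)=\{0\}$, $|\rho'(t)|\le1$ and $0<\rho''(t)\le 1$ for all $t$. $\varepsilon$ is a real random variable with $\mathbb P(\varepsilon\neq0)>0$. For $e\in\mathbb R$ write $\rho_e(u)=\rho(e-u)$. For a convex $f:\mathbb R\to\mathbb R$, $\mathrm{prox}_f(x_0)=\arg\min_{x\in\mathbb R}\{(x_0-x)^2/2+f(x)\}$. The pair $(\sigma,\gamma)$ with $\sigma>0,\gamma>0$ is the (unique) solution of the system $$\frac{\sigma^2}{q\delta}=\mathbb E\big[(\sigma G-\mathrm{prox}_{\gamma\rho_\varepsilon}(\sigma G))^2\big],\qquad 1-\frac1{q\delta}=\sigma^{-1}\mathbb E\big[G\,\mathrm{prox}_{\gamma\rho_\varepsilon}(\sigma G)\big],$$ where $G\sim N(0,1)$ is independent of $\varepsilon$. *)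

theory Defs
  imports "HOL-Probability.Probability"
begin

definition prox :: "(real \<Rightarrow> real) \<Rightarrow> real \<Rightarrow> real" where
  "prox f x0 = (THE x. \<forall>y. (x0 - x)\<^sup>2 / 2 + f x \<le> (x0 - y)\<^sup>2 / 2 + f y)"

definition rho_e :: "(real \<Rightarrow> real) \<Rightarrow> real \<Rightarrow> real \<Rightarrow> real" where
  "rho_e \<rho> e u = \<rho> (e - u)"

definition stdN :: "real measure" where
  "stdN = density lborel std_normal_density"

definition resid :: "(real \<Rightarrow> real) \<Rightarrow> real \<Rightarrow> real \<Rightarrow> real \<Rightarrow> real" where
  "resid \<rho> \<gamma> e x = x - prox (\<lambda>u. \<gamma> * rho_e \<rho> e u) x"

text \<open>The law of eps is Pe.  The pair (G, Gt) with correlation eta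
  is realised as (G, eta*G + sqrt(1-eta^2)*Z) with G, Z iid N(0,1), independent of eps;
  this has exactly the required joint law N(0, [[1,eta],[eta,1]]) x law(eps).\<close>
definition Ffun :: "real measure \<Rightarrow> (real \<Rightarrow> real) \<Rightarrow> real \<Rightarrow> real \<Rightarrow> real \<Rightarrow> real \<Rightarrow> real" where
  "Ffun Pe \<rho> q \<sigma> \<gamma> \<eta> =
     q * (\<integral>w. (case w of (g, z, e) \<Rightarrow>
              resid \<rho> \<gamma> e (\<sigma> * g) * resid \<rho> \<gamma> e (\<sigma> * (\<eta> * g + sqrt (1 - \<eta>\<^sup>2) * z)))
           \<partial>(stdN \<Otimes>\<^sub>M (stdN \<Otimes>\<^sub>M Pe)))
       / (\<integral>w. (case w of (g, e) \<Rightarrow> (resid \<rho> \<gamma> e (\<sigma> * g))\<^sup>2) \<partial>(stdN \<Otimes>\<^sub>M Pe))"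

definition sys_holds :: "real measure \<Rightarrow> (real \<Rightarrow> real) \<Rightarrow> real \<Rightarrow> real \<Rightarrow> real \<Rightarrow> real \<Rightarrow> bool" where
  "sys_holds Pe \<rho> q \<delta> \<sigma> \<gamma> \<longleftrightarrow>
     \<sigma>\<^sup>2 / (q * \<delta>) = (\<integral>w. (case w of (g, e) \<Rightarrow> (resid \<rho> \<gamma> e (\<sigma> * g))\<^sup>2) \<partial>(stdN \<Otimes>\<^sub>M Pe))
   \<and> 1 - 1 / (q * \<delta>) = (1 / \<sigma>) * (\<integral>w. (case w of (g, e) \<Rightarrow>
        g * prox (\<lambda>u. \<gamma> * rho_e \<rho> e u) (\<sigma> * g)) \<partial>(stdN \<Otimes>\<^sub>M Pe))"

end

theory Submission
  imports Defs
begin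


lemma sets_stdN[measurable_cong, simp]: "sets stdN = sets borel"
  by (simp add: stdN_def)

lemma space_stdN[simp]: "space stdN = UNIV"
  by (simp add: stdN_def)

lemma prob_space_stdN: "prob_space stdN"
  unfolding stdN_def using prob_space_normal_density[of 1 0] by simp

interpretation stdN: prob_space stdN by (rule prob_space_stdN)

lemma integral_stdN:
  fixes g :: "real \<Rightarrow> real"
  assumes "g \<in> borel_measurable borel"
  shows "integral\<^sup>L stdN g = (\<integral>x. std_normal_density x * g x \<partial>lborel)"
  unfolding stdN_def using assms
  by (subst integral_density) (auto simp: normal_density_nonneg)

lemma integrable_stdN:
  fixes g :: "real \<Rightarrow> real"
  assumes "g \<in> borel_measurable borel"
  shows "integrable stdN g \<longleftrightarrow> integrable lborel (\<lambda>x. std_normal_density x * g x)"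
  unfolding stdN_def using assms
  by (subst integrable_density) (auto simp: normal_density_nonneg)

lemma integrable_stdN_abs: "integrable stdN (\<lambda>x. \<bar>x\<bar>)"
  using integrable_std_normal_moment_abs[of 1] by (subst integrable_stdN) auto

lemma integrable_stdN_id: "integrable stdN (\<lambda>x. x)"
  using integrable_std_normal_moment[of 1] by (subst integrable_stdN) auto

lemma integral_stdN_sq: "(\<integral>x. x\<^sup>2 \<partial>stdN) = 1"
  using std_normal_moment_even[of 1] by (subst integral_stdN) (auto dest: has_bochner_integral_integral_eq)

lemma integrable_stdN_sq: "integrable stdN (\<lambda>x. x\<^sup>2)"
  using integrable_std_normal_moment[of 2] by (subst integrable_stdN) auto

lemma std_normal_deriv:
  "(std_normal_density has_real_derivative (- x * std_normal_density x)) (at x)"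
  unfolding std_normal_density_def
  by (auto intro!: derivative_eq_intros simp: power2_eq_square field_simps)

lemma std_normal_tendsto_top: "(std_normal_density \<longlongrightarrow> 0) at_top"
  unfolding std_normal_density_def by real_asymp

lemma std_normal_tendsto_bot: "(std_normal_density \<longlongrightarrow> 0) at_bot"
  unfolding std_normal_density_def by real_asymp

lemma stein:
  fixes h h' :: "real \<Rightarrow> real"
  assumes d: "\<And>x. (h has_real_derivative h' x) (at x)"
    and c: "continuous_on UNIV h'"
    and hb: "\<And>x. \<bar>h x\<bar> \<le> B" and h'b: "\<And>x. \<bar>h' x\<bar> \<le> C"
  shows "integrable stdN (\<lambda>x. x * h x)" "integrable stdN h'"
    "(\<integral>x. x * h x \<partial>stdN) = (\<integral>x. h' x \<partial>stdN)"
proof -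
  have hcont: "continuous_on UNIV h"
    using d by (meson DERIV_isCont continuous_at_imp_continuous_on)
  have hm[measurable]: "h \<in> borel_measurable borel"
    using hcont by (rule borel_measurable_continuous_onI)
  have h'm[measurable]: "h' \<in> borel_measurable borel"
    using c by (rule borel_measurable_continuous_onI)
  have i1: "integrable lborel (\<lambda>x. std_normal_density x * h' x)"
  proof (rule Bochner_Integration.integrable_bound[where f="\<lambda>x. C * std_normal_density x"])
    show "integrable lborel (\<lambda>x. C * std_normal_density x)" by simp
    show "AE x in lborel. norm (std_normal_density x * h' x) \<le> norm (C * std_normal_density x)"
    proof (intro AE_I2)
      fix x
      have "std_normal_density x * \<bar>h' x\<bar> \<le> std_normal_density x * \<bar>C\<bar>"
        using h'b[of x] by (intro mult_left_mono) (auto simp: normal_density_nonneg)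
      then show "norm (std_normal_density x * h' x) \<le> norm (C * std_normal_density x)"
        by (simp add: abs_mult normal_density_nonneg mult.commute)
    qed
  qed simp
  have i2: "integrable lborel (\<lambda>x. std_normal_density x * (x * h x))"
  proof (rule Bochner_Integration.integrable_bound[where f="\<lambda>x. B * (std_normal_density x * \<bar>x\<bar>^1)"])
    show "integrable lborel (\<lambda>x. B * (std_normal_density x * \<bar>x\<bar>^1))"
      using integrable_std_normal_moment_abs[of 1] by simp
    show "AE x in lborel. norm (std_normal_density x * (x * h x)) \<le> norm (B * (std_normal_density x * \<bar>x\<bar>^1))"
    proof (intro AE_I2)
      fix x
      have "std_normal_density x * \<bar>x\<bar> * \<bar>h x\<bar> \<le> std_normal_density x * \<bar>x\<bar> * \<bar>B\<bar>"
        using hb[of x] by (intro mult_left_mono) (auto simp: normal_density_nonneg)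
      then show "norm (std_normal_density x * (x * h x)) \<le> norm (B * (std_normal_density x * \<bar>x\<bar>^1))"
        by (simp add: abs_mult normal_density_nonneg mult.commute mult.left_commute)
    qed
  qed simp
  show "integrable stdN (\<lambda>x. x * h x)" using i2 by (subst integrable_stdN) auto
  show "integrable stdN h'" using i1 by (subst integrable_stdN) auto
  define f where "f x = std_normal_density x * h' x - std_normal_density x * (x * h x)" for x
  define F where "F x = h x * std_normal_density x" for x
  have FTC: "(LBINT x=-\<infinity>..\<infinity>. f x) = 0 - 0"
  proof (rule interval_integral_FTC_integrable)
    show "(F has_vector_derivative f x) (at x)" for x
      unfolding F_def f_def has_real_derivative_iff_has_vector_derivative[symmetric]
      by (rule derivative_eq_intros d std_normal_deriv refl)+ (simp add: algebra_simps)
    show "isCont f x" for x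
      unfolding f_def using c hcont
      by (intro continuous_intros) (auto simp: continuous_on_eq_continuous_at normal_density_def)
    show "set_integrable lborel (einterval (-\<infinity>) \<infinity>) f"
      unfolding f_def set_integrable_def using i1 i2 by simp
    have "(F \<longlongrightarrow> 0) at_top"
    proof (rule Lim_null_comparison)
      show "\<forall>\<^sub>F x in at_top. norm (F x) \<le> B * std_normal_density x"
        using hb by (intro always_eventually allI) (auto simp: F_def abs_mult normal_density_nonneg intro!: mult_right_mono)
      show "((\<lambda>x. B * std_normal_density x) \<longlongrightarrow> 0) at_top"
        using tendsto_mult_left[OF std_normal_tendsto_top, of B] by simp
    qed
    then show "((F \<circ> real_of_ereal) \<longlongrightarrow> 0) (at_left \<infinity>)"
      by (simp add: ereal_tendsto_simps1)
    have "(F \<longlongrightarrow> 0) at_bot"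
    proof (rule Lim_null_comparison)
      show "\<forall>\<^sub>F x in at_bot. norm (F x) \<le> B * std_normal_density x"
        using hb by (intro always_eventually allI) (auto simp: F_def abs_mult normal_density_nonneg intro!: mult_right_mono)
      show "((\<lambda>x. B * std_normal_density x) \<longlongrightarrow> 0) at_bot"
        using tendsto_mult_left[OF std_normal_tendsto_bot, of B] by simp
    qed
    then show "((F \<circ> real_of_ereal) \<longlongrightarrow> 0) (at_right (-\<infinity>))"
      by (simp add: ereal_tendsto_simps1)
  qed simp
  have "(LBINT x=-\<infinity>..\<infinity>. f x) = (\<integral>x. f x \<partial>lborel)"
    by (simp add: interval_lebesgue_integral_def set_lebesgue_integral_def)
  also have "\<dots> = (\<integral>x. std_normal_density x * h' x \<partial>lborel) - (\<integral>x. std_normal_density x * (x * h x) \<partial>lborel)"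
    unfolding f_def using i1 i2 by simp
  finally show "(\<integral>x. x * h x \<partial>stdN) = (\<integral>x. h' x \<partial>stdN)"
    using FTC by (simp add: integral_stdN)
qed



abbreviation N2 :: "(real \<times> real) measure" where "N2 \<equiv> stdN \<Otimes>\<^sub>M stdN"

lemma sets_N2[measurable_cong]: "sets N2 = sets (borel \<Otimes>\<^sub>M borel)"
  by (intro sets_pair_measure_cong) simp_all

interpretation N2: pair_prob_space stdN stdN
  by (simp add: pair_prob_space_def pair_sigma_finite_def prob_space_stdN prob_space_imp_sigma_finite)

lemma density_swap:
  fixes c s g x :: real
  assumes cs: "c\<^sup>2 + s\<^sup>2 = 1" and s: "s > 0"
  shows "std_normal_density g * std_normal_density ((x - c * g) / s) =
         std_normal_density x * std_normal_density ((g - c * x) / s)"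
proof -
  have "- g\<^sup>2 / 2 + - ((x - c * g) / s)\<^sup>2 / 2 = - x\<^sup>2 / 2 + - ((g - c * x) / s)\<^sup>2 / 2"
  proof -
    have "s\<^sup>2 = 1 - c\<^sup>2" using cs by simp
    have "g\<^sup>2 * s\<^sup>2 + (x - c * g)\<^sup>2 = x\<^sup>2 * s\<^sup>2 + (g - c * x)\<^sup>2"
      unfolding \<open>s\<^sup>2 = 1 - c\<^sup>2\<close> by (simp add: power2_eq_square algebra_simps)
    then show ?thesis using s by (simp add: power_divide field_simps)
  qed
  then have "exp (- g\<^sup>2 / 2) * exp (- ((x - c * g) / s)\<^sup>2 / 2) = exp (- x\<^sup>2 / 2) * exp (- ((g - c * x) / s)\<^sup>2 / 2)"
    by (simp add: exp_add[symmetric])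
  then show ?thesis unfolding std_normal_density_def by simp
qed

lemma ennreal_mult3: "0 \<le> a \<Longrightarrow> 0 \<le> b \<Longrightarrow> ennreal a * (ennreal b * h) = ennreal (a * b) * h"
  by (simp add: ennreal_mult mult.assoc)

lemma affine_nn:
  fixes H :: "real \<Rightarrow> ennreal"
  assumes [measurable]: "H \<in> borel_measurable borel" and s: "s > 0"
  shows "(\<integral>\<^sup>+z. ennreal (std_normal_density z) * H (t + s * z) \<partial>lborel)
       = (\<integral>\<^sup>+x. ennreal (std_normal_density ((x - t) / s) / s) * H x \<partial>lborel)"
proof -
  have "(\<integral>\<^sup>+x. ennreal (std_normal_density ((x - t) / s) / s) * H x \<partial>lborel)
     = ennreal \<bar>s\<bar> * (\<integral>\<^sup>+z. ennreal (std_normal_density ((t + s * z - t) / s) / s) * H (t + s * z) \<partial>lborel)"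
    using s by (intro nn_integral_real_affine) auto
  also have "\<dots> = (\<integral>\<^sup>+z. ennreal s * (ennreal (std_normal_density z / s) * H (t + s * z)) \<partial>lborel)"
    using s by (subst nn_integral_cmult) auto
  also have "\<dots> = (\<integral>\<^sup>+z. ennreal (std_normal_density z) * H (t + s * z) \<partial>lborel)"
  proof (intro nn_integral_cong)
    fix z
    have "ennreal s * ennreal (std_normal_density z / s) = ennreal (std_normal_density z)"
      using s by (subst ennreal_mult[symmetric]) (auto simp: normal_density_nonneg)
    then show "ennreal s * (ennreal (std_normal_density z / s) * H (t + s * z)) =
         ennreal (std_normal_density z) * H (t + s * z)"
      by (simp add: mult.assoc[symmetric])
  qed
  finally show ?thesis by simp
qed

lemma rot_nn:
  fixes H :: "real \<times> real \<Rightarrow> ennreal"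
  assumes [measurable]: "H \<in> borel_measurable (borel \<Otimes>\<^sub>M borel)"
    and cs: "c\<^sup>2 + s\<^sup>2 = 1" and s: "s > 0"
  shows "(\<integral>\<^sup>+w. H (fst w, c * fst w + s * snd w) \<partial>N2) = (\<integral>\<^sup>+w. H (c * fst w + s * snd w, fst w) \<partial>N2)"
proof -
  have [simp]: "0 \<le> std_normal_density y / s" for y using s by (simp add: normal_density_nonneg)
  define K where "K g x = ennreal (std_normal_density g * (std_normal_density ((x - c * g) / s) / s)) * H (g, x)" for g x
  have Km[measurable]: "case_prod K \<in> borel_measurable (lborel \<Otimes>\<^sub>M lborel)"
    unfolding K_def by measurable
  have m1[measurable]: "(\<lambda>y. H (g, y)) \<in> borel_measurable borel" for g by measurable
  have m2[measurable]: "(\<lambda>y. H (y, g)) \<in> borel_measurable borel" for g by measurable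
  have A1: "(\<integral>\<^sup>+z. ennreal (std_normal_density z) * H (g, c * g + s * z) \<partial>lborel) = (\<integral>\<^sup>+x. ennreal (std_normal_density ((x - c * g) / s) / s) * H (g, x) \<partial>lborel)" for g
    using affine_nn[OF m1[of g] s, of "c * g"] by simp
  have A2: "(\<integral>\<^sup>+z. ennreal (std_normal_density z) * H (c * g + s * z, g) \<partial>lborel) = (\<integral>\<^sup>+x. ennreal (std_normal_density ((x - c * g) / s) / s) * H (x, g) \<partial>lborel)" for g
    using affine_nn[OF m2[of g] s, of "c * g"] by simp
  have L: "(\<integral>\<^sup>+w. H (fst w, c * fst w + s * snd w) \<partial>N2) = (\<integral>\<^sup>+g. \<integral>\<^sup>+x. K g x \<partial>lborel \<partial>lborel)"
  proof -
    have "(\<integral>\<^sup>+w. H (fst w, c * fst w + s * snd w) \<partial>N2) = (\<integral>\<^sup>+g. \<integral>\<^sup>+z. H (g, c * g + s * z) \<partial>stdN \<partial>stdN)"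
      by (subst stdN.nn_integral_fst[symmetric]) auto
    also have "\<dots> = (\<integral>\<^sup>+g. ennreal (std_normal_density g) * \<integral>\<^sup>+x. ennreal (std_normal_density ((x - c * g) / s) / s) * H (g, x) \<partial>lborel \<partial>lborel)"
      unfolding stdN_def
      by (subst nn_integral_density, measurable)+
        (simp add: A1)
    also have "\<dots> = (\<integral>\<^sup>+g. \<integral>\<^sup>+x. K g x \<partial>lborel \<partial>lborel)"
      unfolding K_def
      by (intro nn_integral_cong, subst nn_integral_cmult[symmetric])
         (auto simp: ennreal_mult3 normal_density_nonneg s)
    finally show ?thesis .
  qed
  have R: "(\<integral>\<^sup>+w. H (c * fst w + s * snd w, fst w) \<partial>N2) = (\<integral>\<^sup>+x. \<integral>\<^sup>+g. K g x \<partial>lborel \<partial>lborel)"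
  proof -
    have "(\<integral>\<^sup>+w. H (c * fst w + s * snd w, fst w) \<partial>N2) = (\<integral>\<^sup>+x. \<integral>\<^sup>+w. H (c * x + s * w, x) \<partial>stdN \<partial>stdN)"
      by (subst stdN.nn_integral_fst[symmetric]) auto
    also have "\<dots> = (\<integral>\<^sup>+x. ennreal (std_normal_density x) * \<integral>\<^sup>+g. ennreal (std_normal_density ((g - c * x) / s) / s) * H (g, x) \<partial>lborel \<partial>lborel)"
      unfolding stdN_def
      by (subst nn_integral_density, measurable)+
        (simp add: A2)
    also have "\<dots> = (\<integral>\<^sup>+x. \<integral>\<^sup>+g. K g x \<partial>lborel \<partial>lborel)"
      unfolding K_def
      by (intro nn_integral_cong, subst nn_integral_cmult[symmetric])
         (auto simp: ennreal_mult3 normal_density_nonneg s density_swap[OF cs s])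
    finally show ?thesis .
  qed
  show ?thesis unfolding L R by (rule lborel_pair.Fubini'[symmetric]) (rule Km)
qed

lemma rot_distr:
  assumes cs: "c\<^sup>2 + s\<^sup>2 = 1" and s: "s > 0"
  shows "distr N2 (borel \<Otimes>\<^sub>M borel) (\<lambda>w. (fst w, c * fst w + s * snd w)) =
         distr N2 (borel \<Otimes>\<^sub>M borel) (\<lambda>w. (c * fst w + s * snd w, fst w))"
proof (rule measure_eqI)
  fix A assume "A \<in> sets (distr N2 (borel \<Otimes>\<^sub>M borel) (\<lambda>w. (fst w, c * fst w + s * snd w)))"
  then have A[measurable]: "A \<in> sets (borel \<Otimes>\<^sub>M borel)" by simp
  have "emeasure (distr N2 (borel \<Otimes>\<^sub>M borel) (\<lambda>w. (fst w, c * fst w + s * snd w))) A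
     = (\<integral>\<^sup>+w. indicator A (fst w, c * fst w + s * snd w) \<partial>N2)"
    by (subst nn_integral_indicator[symmetric], simp, subst nn_integral_distr) auto
  also have "\<dots> = (\<integral>\<^sup>+w. indicator A (c * fst w + s * snd w, fst w) \<partial>N2)"
    by (rule rot_nn[OF _ cs s]) measurable
  also have "\<dots> = emeasure (distr N2 (borel \<Otimes>\<^sub>M borel) (\<lambda>w. (c * fst w + s * snd w, fst w))) A"
    by (subst nn_integral_indicator[symmetric], simp, subst nn_integral_distr) auto
  finally show "emeasure (distr N2 (borel \<Otimes>\<^sub>M borel) (\<lambda>w. (fst w, c * fst w + s * snd w))) A =
    emeasure (distr N2 (borel \<Otimes>\<^sub>M borel) (\<lambda>w. (c * fst w + s * snd w, fst w))) A" .
qed simp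

lemma rot_integral:
  fixes F :: "real \<times> real \<Rightarrow> real"
  assumes [measurable]: "F \<in> borel_measurable (borel \<Otimes>\<^sub>M borel)"
    and cs: "c\<^sup>2 + s\<^sup>2 = 1" and s: "s > 0"
  shows "(\<integral>w. F (fst w, c * fst w + s * snd w) \<partial>N2) = (\<integral>w. F (c * fst w + s * snd w, fst w) \<partial>N2)"
proof -
  have "(\<integral>w. F (fst w, c * fst w + s * snd w) \<partial>N2) = integral\<^sup>L (distr N2 (borel \<Otimes>\<^sub>M borel) (\<lambda>w. (fst w, c * fst w + s * snd w))) F"
    by (subst integral_distr) auto
  also have "\<dots> = integral\<^sup>L (distr N2 (borel \<Otimes>\<^sub>M borel) (\<lambda>w. (c * fst w + s * snd w, fst w))) F"
    by (simp add: rot_distr[OF cs s])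
  also have "\<dots> = (\<integral>w. F (c * fst w + s * snd w, fst w) \<partial>N2)"
    by (subst integral_distr) auto
  finally show ?thesis .
qed

lemma integral_N2_fst:
  fixes k :: "real \<Rightarrow> real"
  assumes [measurable]: "k \<in> borel_measurable borel"
  shows "(\<integral>w. k (fst w) \<partial>N2) = integral\<^sup>L stdN k"
proof -
  have "(\<integral>w. k (fst w) \<partial>N2) = integral\<^sup>L (distr N2 stdN fst) k"
    by (subst integral_distr) auto
  also have "distr N2 stdN fst = stdN" by (rule stdN.distr_pair_fst)
  finally show ?thesis .
qed

lemma marginal:
  fixes k :: "real \<Rightarrow> real"
  assumes [measurable]: "k \<in> borel_measurable borel"
    and cs: "c\<^sup>2 + s\<^sup>2 = 1" and s: "s > 0"
  shows "(\<integral>w. k (c * fst w + s * snd w) \<partial>N2) = integral\<^sup>L stdN k"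
  using rot_integral[of "\<lambda>p. k (snd p)", OF _ cs s] integral_N2_fst[of k] by simp



lemma mvt_quot_bound:
  fixes f :: "real \<Rightarrow> real"
  assumes "\<And>t. (f has_real_derivative f' t) (at t)" "\<And>t. \<bar>f' t\<bar> \<le> B" "t \<noteq> t0"
  shows "\<bar>(f t - f t0) / (t - t0)\<bar> \<le> B"
proof (cases "t < t0")
  case True
  from MVT2[OF True, of f f'] assms(1) obtain z where "f t0 - f t = (t0 - t) * f' z" by blast
  then have "(f t - f t0) / (t - t0) = f' z" using True by (simp add: field_simps)
  then show ?thesis using assms(2) by simp
next
  case False
  then have "t0 < t" using assms(3) by simp
  from MVT2[OF this, of f f'] assms(1) obtain z where "f t - f t0 = (t - t0) * f' z" by blast
  then have "(f t - f t0) / (t - t0) = f' z" using \<open>t0 < t\<close> by (simp add: field_simps)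
  then show ?thesis using assms(2) by simp
qed

lemma deriv_integral:
  fixes F F' :: "real \<Rightarrow> 'a \<Rightarrow> real" and W :: "'a \<Rightarrow> real"
  assumes Fm: "\<And>t. F t \<in> borel_measurable M" and F'm: "\<And>t. F' t \<in> borel_measurable M"
    and Fi: "\<And>t. integrable M (F t)"
    and D: "\<And>t x. x \<in> space M \<Longrightarrow> ((\<lambda>t. F t x) has_real_derivative F' t x) (at t)"
    and Wi: "integrable M W" and Wb: "\<And>t x. x \<in> space M \<Longrightarrow> \<bar>F' t x\<bar> \<le> W x"
  shows "((\<lambda>t. \<integral>x. F t x \<partial>M) has_real_derivative (\<integral>x. F' t0 x \<partial>M)) (at t0)"
  unfolding has_field_derivative_iff
proof (subst tendsto_at_iff_sequentially, intro allI impI)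
  fix X :: "nat \<Rightarrow> real" assume X: "\<forall>i. X i \<in> UNIV - {t0}" "X \<longlonglongrightarrow> t0"
  define s where "s i x = (F (X i) x - F t0 x) / (X i - t0)" for i x
  have eq: "((\<lambda>t. ((\<integral>x. F t x \<partial>M) - (\<integral>x. F t0 x \<partial>M)) / (t - t0)) \<circ> X) i = integral\<^sup>L M (s i)" for i
    unfolding s_def comp_def using Fi
    by (simp add: Bochner_Integration.integral_diff)
  have "(\<lambda>i. integral\<^sup>L M (s i)) \<longlonglongrightarrow> integral\<^sup>L M (F' t0)"
  proof (rule integral_dominated_convergence[where w=W])
    show "F' t0 \<in> borel_measurable M" by (rule F'm)
    show "s i \<in> borel_measurable M" for i unfolding s_def using Fm by measurable
    show "integrable M W" by (rule Wi)
    show "AE x in M. (\<lambda>i. s i x) \<longlonglongrightarrow> F' t0 x"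
    proof (rule AE_I2)
      fix x assume x: "x \<in> space M"
      have "((\<lambda>t. (F t x - F t0 x) / (t - t0)) \<longlongrightarrow> F' t0 x) (at t0)"
        using D[OF x, of t0] unfolding has_field_derivative_iff .
      then show "(\<lambda>i. s i x) \<longlonglongrightarrow> F' t0 x"
        unfolding s_def using X by (subst (asm) tendsto_at_iff_sequentially) (auto simp: comp_def)
    qed
    show "AE x in M. norm (s i x) \<le> W x" for i
    proof (rule AE_I2)
      fix x assume x: "x \<in> space M"
      show "norm (s i x) \<le> W x"
        unfolding s_def real_norm_def
        by (rule mvt_quot_bound[where f'="\<lambda>t. F' t x"]) (use D[OF x] Wb[OF x] X in auto)
    qed
  qed
  then show "((\<lambda>t. ((\<integral>x. F t x \<partial>M) - (\<integral>x. F t0 x \<partial>M)) / (t - t0)) \<circ> X) \<longlonglongrightarrow> (\<integral>x. F' t0 x \<partial>M)"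
    unfolding eq by simp
qed



lemma integrable_N2_fst:
  fixes k :: "real \<Rightarrow> real"
  assumes [measurable]: "k \<in> borel_measurable borel" and "integrable stdN k"
  shows "integrable N2 (\<lambda>w. k (fst w))"
proof -
  have "integrable (distr N2 stdN fst) k" using assms(2) by (simp add: stdN.distr_pair_fst)
  then show ?thesis by (subst (asm) integrable_distr_eq) auto
qed

lemma integrable_N2_snd:
  fixes k :: "real \<Rightarrow> real"
  assumes [measurable]: "k \<in> borel_measurable borel" and "integrable stdN k"
  shows "integrable N2 (\<lambda>w. k (snd w))"
proof -
  have "integrable N2 (\<lambda>w. k (fst w))" by (rule integrable_N2_fst[OF assms])
  then have "integrable N2 (\<lambda>(x, y). k (snd (y, x)))" by (simp add: case_prod_unfold)
  then show ?thesis by (subst (asm) N2.integrable_product_swap_iff) auto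
qed

locale gcore =
  fixes f f' :: "real \<Rightarrow> real" and B L :: real
  assumes d: "\<And>x. (f has_real_derivative f' x) (at x)"
    and c: "continuous_on UNIV f'"
    and fb: "\<And>x. \<bar>f x\<bar> \<le> B"
    and f'b: "\<And>x. 0 \<le> f' x \<and> f' x \<le> L"
begin

lemma fcont: "continuous_on UNIV f"
  using d by (meson DERIV_isCont continuous_at_imp_continuous_on)

lemma fm[measurable]: "f \<in> borel_measurable borel"
  using fcont by (rule borel_measurable_continuous_onI)

lemma f'm[measurable]: "f' \<in> borel_measurable borel"
  using c by (rule borel_measurable_continuous_onI)

lemma L_nonneg: "0 \<le> L" using f'b[of 0] by simp

lemma f'abs: "\<bar>f' x\<bar> \<le> L" using f'b[of x] by simp

lemma bounded_int_N2:
  fixes g :: "real \<times> real \<Rightarrow> real" and C :: real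
  assumes [measurable]: "g \<in> borel_measurable N2" and "\<And>w. \<bar>g w\<bar> \<le> C"
  shows "integrable N2 g"
  by (rule N2.P.integrable_const_bound[where B=C]) (use assms in auto)

definition nth :: "real \<Rightarrow> real" where
  "nth t = (\<integral>w. f (fst w) * f (cos t * fst w + sin t * snd w) \<partial>N2)"

definition mth :: "real \<Rightarrow> real" where
  "mth t = (\<integral>w. f' (fst w) * f' (cos t * fst w + sin t * snd w) \<partial>N2)"

definition Kc :: real where "Kc = (\<integral>x. (f' x)\<^sup>2 \<partial>stdN)"

lemma nth_deriv:
  "(nth has_real_derivative
     (\<integral>w. f (fst w) * (f' (cos t * fst w + sin t * snd w) * (- sin t * fst w + cos t * snd w)) \<partial>N2)) (at t)"
  unfolding nth_def
proof (rule deriv_integral[where W="\<lambda>w. B * L * (\<bar>fst w\<bar> + \<bar>snd w\<bar>)"])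
  show "(\<lambda>w. f (fst w) * f (cos t * fst w + sin t * snd w)) \<in> borel_measurable N2" for t
    by measurable
  show "(\<lambda>w. f (fst w) * (f' (cos t * fst w + sin t * snd w) * (- sin t * fst w + cos t * snd w))) \<in> borel_measurable N2" for t
    by measurable
  show "integrable N2 (\<lambda>w. f (fst w) * f (cos t * fst w + sin t * snd w))" for t
  proof (rule bounded_int_N2[where C="B * B"])
    fix w
    show "\<bar>f (fst w) * f (cos t * fst w + sin t * snd w)\<bar> \<le> B * B"
      unfolding abs_mult by (rule mult_mono) (use fb in \<open>auto intro: order_trans[OF abs_ge_zero fb]\<close>)
  qed measurable
  show "integrable N2 (\<lambda>w. B * L * (\<bar>fst w\<bar> + \<bar>snd w\<bar>))"
    using integrable_N2_fst[of abs, OF _ integrable_stdN_abs] integrable_N2_snd[of abs, OF _ integrable_stdN_abs]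
    by simp
  fix t and w :: "real \<times> real"
  have "((\<lambda>t. cos t * fst w + sin t * snd w) has_real_derivative (- sin t * fst w + cos t * snd w)) (at t)"
    by (auto intro!: derivative_eq_intros)
  from DERIV_chain2[OF d this]
  show "((\<lambda>t. f (fst w) * f (cos t * fst w + sin t * snd w)) has_real_derivative
        f (fst w) * (f' (cos t * fst w + sin t * snd w) * (- sin t * fst w + cos t * snd w))) (at t)"
    by (rule DERIV_cmult)
  have B0: "0 \<le> B" using fb[of 0] by simp
  have "\<bar>- sin t * fst w + cos t * snd w\<bar> \<le> \<bar>fst w\<bar> + \<bar>snd w\<bar>"
  proof -
    have "\<bar>- sin t * fst w\<bar> \<le> \<bar>fst w\<bar>" by (simp add: abs_mult mult_left_le_one_le)
    moreover have "\<bar>cos t * snd w\<bar> \<le> \<bar>snd w\<bar>" by (simp add: abs_mult mult_left_le_one_le)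
    ultimately show ?thesis by linarith
  qed
  then show "\<bar>f (fst w) * (f' (cos t * fst w + sin t * snd w) * (- sin t * fst w + cos t * snd w))\<bar>
        \<le> B * L * (\<bar>fst w\<bar> + \<bar>snd w\<bar>)"
    unfolding abs_mult mult.assoc
    by (intro mult_mono fb f'abs) (auto simp: B0 L_nonneg)
qed

lemma stein_shift:
  assumes s: "s > 0"
  shows "(\<integral>w. w * f (a + s * w) \<partial>stdN) = s * (\<integral>w. f' (a + s * w) \<partial>stdN)"
proof -
  have dd: "((\<lambda>w. f (a + s * w)) has_real_derivative f' (a + s * w) * s) (at w)" for w
  proof -
    have "((\<lambda>w. a + s * w) has_real_derivative s) (at w)" by (auto intro!: derivative_eq_intros)
    from DERIV_chain2[OF d this] show ?thesis by simp
  qed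
  have cc: "continuous_on UNIV (\<lambda>w. f' (a + s * w) * s)"
    by (intro continuous_intros continuous_on_compose2[OF c]) auto
  have "(\<integral>w. w * f (a + s * w) \<partial>stdN) = (\<integral>w. f' (a + s * w) * s \<partial>stdN)"
    by (rule stein(3)[OF dd cc, of B "L * s"]) (use fb f'abs s in \<open>auto simp: abs_mult intro: mult_right_mono\<close>)
  then show ?thesis by simp
qed

lemma deriv_ident:
  assumes s: "sin t > 0"
  shows "(\<integral>w. f (fst w) * (f' (cos t * fst w + sin t * snd w) * (- sin t * fst w + cos t * snd w)) \<partial>N2)
       = - sin t * mth t"
proof -
  define c where "c = cos t"
  define s where "s = sin t"
  have cs: "c\<^sup>2 + s\<^sup>2 = 1" unfolding c_def s_def by simp
  have s0: "s > 0" using assms by (simp add: s_def)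
  have B0: "0 \<le> B" using fb[of 0] by simp
  define Q where "Q p = f (fst p) * (f' (snd p) * ((c * snd p - fst p) / s))" for p
  have Qm[measurable]: "Q \<in> borel_measurable (borel \<Otimes>\<^sub>M borel)" unfolding Q_def by measurable
  have "(\<integral>w. f (fst w) * (f' (c * fst w + s * snd w) * (- s * fst w + c * snd w)) \<partial>N2)
      = (\<integral>w. Q (fst w, c * fst w + s * snd w) \<partial>N2)"
  proof (intro Bochner_Integration.integral_cong refl)
    fix w :: "real \<times> real"
    have "s\<^sup>2 = 1 - c\<^sup>2" using cs by simp
    have "c * (c * fst w + s * snd w) - fst w = s * (- s * fst w + c * snd w) + (c\<^sup>2 + s\<^sup>2 - 1) * fst w"
      by (simp add: power2_eq_square algebra_simps)
    then have "c * (c * fst w + s * snd w) - fst w = s * (- s * fst w + c * snd w)"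
      using cs by simp
    then show "f (fst w) * (f' (c * fst w + s * snd w) * (- s * fst w + c * snd w)) = Q (fst w, c * fst w + s * snd w)"
      unfolding Q_def using s0 by simp
  qed
  also have "\<dots> = (\<integral>w. Q (c * fst w + s * snd w, fst w) \<partial>N2)"
    by (rule rot_integral[OF Qm cs s0])
  also have "\<dots> = (\<integral>w. - (f' (fst w) * (snd w * f (c * fst w + s * snd w))) \<partial>N2)"
    unfolding Q_def using s0 by (intro Bochner_Integration.integral_cong refl) (simp add: field_simps)
  also have "\<dots> = - (\<integral>w. f' (fst w) * (snd w * f (c * fst w + s * snd w)) \<partial>N2)"
    by simp
  also have "(\<integral>w. f' (fst w) * (snd w * f (c * fst w + s * snd w)) \<partial>N2)
      = (\<integral>x. \<integral>w. f' x * (w * f (c * x + s * w)) \<partial>stdN \<partial>stdN)"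
  proof (subst N2.integral_fst'[symmetric])
    show "integrable N2 (\<lambda>w. f' (fst w) * (snd w * f (c * fst w + s * snd w)))"
    proof (rule Bochner_Integration.integrable_bound[where f="\<lambda>w. L * B * \<bar>snd w\<bar>"])
      show "integrable N2 (\<lambda>w. L * B * \<bar>snd w\<bar>)"
        using integrable_N2_snd[of abs, OF _ integrable_stdN_abs] by simp
      show "AE w in N2. norm (f' (fst w) * (snd w * f (c * fst w + s * snd w))) \<le> norm (L * B * \<bar>snd w\<bar>)"
      proof (intro AE_I2)
        fix w :: "real \<times> real"
        have "\<bar>f' (fst w)\<bar> * (\<bar>snd w\<bar> * \<bar>f (c * fst w + s * snd w)\<bar>) \<le> L * (\<bar>snd w\<bar> * B)"
          by (intro mult_mono f'abs fb) (auto simp: L_nonneg)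
        then show "norm (f' (fst w) * (snd w * f (c * fst w + s * snd w))) \<le> norm (L * B * \<bar>snd w\<bar>)"
          using L_nonneg B0 by (simp add: abs_mult mult_ac)
      qed
    qed measurable
  qed simp
  also have "\<dots> = (\<integral>x. f' x * (s * \<integral>w. f' (c * x + s * w) \<partial>stdN) \<partial>stdN)"
    by (simp add: stein_shift[OF s0])
  also have "\<dots> = s * (\<integral>x. \<integral>w. f' x * f' (c * x + s * w) \<partial>stdN \<partial>stdN)"
    by (simp add: mult_ac)
  also have "(\<integral>x. \<integral>w. f' x * f' (c * x + s * w) \<partial>stdN \<partial>stdN) = (\<integral>w. f' (fst w) * f' (c * fst w + s * snd w) \<partial>N2)"
  proof (subst N2.integral_fst'[symmetric])
    show "integrable N2 (\<lambda>w. f' (fst w) * f' (c * fst w + s * snd w))"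
    proof (rule bounded_int_N2[where C="L * L"])
      fix w :: "real \<times> real"
      show "\<bar>f' (fst w) * f' (c * fst w + s * snd w)\<bar> \<le> L * L"
        unfolding abs_mult by (intro mult_mono f'abs) (auto simp: L_nonneg)
    qed measurable
  qed simp
  also have "\<dots> = mth t"
  proof -
    define Q2 where "Q2 p = f' (snd p) * f' (fst p)" for p
    have [measurable]: "Q2 \<in> borel_measurable (borel \<Otimes>\<^sub>M borel)" unfolding Q2_def by measurable
    have "(\<integral>w. Q2 (fst w, c * fst w + s * snd w) \<partial>N2) = (\<integral>w. Q2 (c * fst w + s * snd w, fst w) \<partial>N2)"
      by (rule rot_integral[OF _ cs s0]) measurable
    then show ?thesis unfolding mth_def Q2_def c_def s_def by (simp add: mult_ac)
  qed
  finally show ?thesis unfolding c_def s_def by simp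
qed

lemma sqb: "\<bar>(f' x)\<^sup>2\<bar> \<le> L * L"
  using f'b[of x] by (simp add: power2_eq_square mult_mono)

lemma mth_bounds:
  assumes s: "sin t > 0"
  shows "0 \<le> mth t" "mth t \<le> Kc"
proof -
  show "0 \<le> mth t" unfolding mth_def
    by (intro Bochner_Integration.integral_nonneg) (use f'b in auto)
  define c where "c = cos t"
  define s where "s = sin t"
  have cs: "c\<^sup>2 + s\<^sup>2 = 1" unfolding c_def s_def by simp
  have s0: "s > 0" using assms by (simp add: s_def)
  have i1: "integrable N2 (\<lambda>w. (f' (fst w))\<^sup>2)"
    by (rule bounded_int_N2[where C="L * L"]) (use sqb in auto)
  have i2: "integrable N2 (\<lambda>w. (f' (c * fst w + s * snd w))\<^sup>2)"
    by (rule bounded_int_N2[where C="L * L"]) (use sqb in auto)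
  have i3: "integrable N2 (\<lambda>w. f' (fst w) * f' (c * fst w + s * snd w))"
    by (rule bounded_int_N2[where C="L * L"]) (use f'b L_nonneg in \<open>auto simp: abs_mult intro!: mult_mono\<close>)
  have "mth t \<le> (\<integral>w. ((f' (fst w))\<^sup>2 + (f' (c * fst w + s * snd w))\<^sup>2) / 2 \<partial>N2)"
    unfolding mth_def c_def[symmetric] s_def[symmetric]
  proof (rule integral_mono)
    show "integrable N2 (\<lambda>w. ((f' (fst w))\<^sup>2 + (f' (c * fst w + s * snd w))\<^sup>2) / 2)"
      using i1 i2 by simp
    fix w :: "real \<times> real"
    have "0 \<le> (f' (fst w) - f' (c * fst w + s * snd w))\<^sup>2" by simp
    then show "f' (fst w) * f' (c * fst w + s * snd w) \<le> ((f' (fst w))\<^sup>2 + (f' (c * fst w + s * snd w))\<^sup>2) / 2"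
      by (simp add: power2_eq_square algebra_simps)
  qed (rule i3)
  also have "\<dots> = ((\<integral>w. (f' (fst w))\<^sup>2 \<partial>N2) + (\<integral>w. (f' (c * fst w + s * snd w))\<^sup>2 \<partial>N2)) / 2"
    using i1 i2 by simp
  also have "(\<integral>w. (f' (fst w))\<^sup>2 \<partial>N2) = Kc"
    unfolding Kc_def by (rule integral_N2_fst) measurable
  also have "(\<integral>w. (f' (c * fst w + s * snd w))\<^sup>2 \<partial>N2) = Kc"
    unfolding Kc_def by (rule marginal[OF _ cs s0, of "\<lambda>x. (f' x)\<^sup>2"]) measurable
  finally show "mth t \<le> Kc" by simp
qed

lemma Kc_bound: "Kc \<le> L * (\<integral>x. x * f x \<partial>stdN)"
proof -
  have B0: "0 \<le> B" using fb[of 0] by simp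
  have st: "integrable stdN f'" "(\<integral>x. x * f x \<partial>stdN) = (\<integral>x. f' x \<partial>stdN)"
    using stein(2,3)[OF d c fb f'abs] by auto
  have "Kc \<le> (\<integral>x. L * f' x \<partial>stdN)"
    unfolding Kc_def
  proof (rule integral_mono)
    show "integrable stdN (\<lambda>x. (f' x)\<^sup>2)"
      by (rule stdN.integrable_const_bound[where B="L * L"]) (use sqb in auto)
    show "integrable stdN (\<lambda>x. L * f' x)" using st by simp
    fix x show "(f' x)\<^sup>2 \<le> L * f' x" using f'b[of x] by (simp add: power2_eq_square mult_right_mono)
  qed
  also have "\<dots> = L * (\<integral>x. x * f x \<partial>stdN)" using st by simp
  finally show ?thesis .
qed

definition neta :: "real \<Rightarrow> real" where
  "neta e = (\<integral>w. f (fst w) * f (e * fst w + sqrt (1 - e\<^sup>2) * snd w) \<partial>N2)"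

lemma neta_nth: "-1 \<le> e \<Longrightarrow> e \<le> 1 \<Longrightarrow> neta e = nth (arccos e)"
  unfolding neta_def nth_def by (simp add: sin_arccos)

lemma nth_cont: "continuous_on A nth"
  using nth_deriv by (meson DERIV_isCont continuous_at_imp_continuous_on)

lemma core_mono:
  assumes ab: "-1 \<le> a" "a \<le> b" "b \<le> 1"
  shows "neta a \<le> neta b" "neta b - neta a \<le> (b - a) * Kc"
proof -
  define ta tb where "ta = arccos a" and "tb = arccos b"
  have tab: "tb \<le> ta" unfolding ta_def tb_def using ab by (intro arccos_le_arccos) auto
  have t0: "0 \<le> tb" unfolding tb_def using ab by (intro arccos_lbound) auto
  have tp: "ta \<le> pi" unfolding ta_def using ab by (intro arccos_ubound) auto
  have sinpos: "sin t > 0" if "tb < t" "t < ta" for t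
    using t0 tp that by (intro sin_gt_zero) auto
  have D: "((\<lambda>t. - nth t) has_real_derivative sin t * mth t) (at t)" if "tb < t" "t < ta" for t
    using DERIV_minus[OF nth_deriv[of t]] deriv_ident[OF sinpos[OF that]] by simp
  have "- nth tb \<le> - nth ta"
  proof (rule DERIV_nonneg_imp_increasing_open[OF tab])
    fix t assume t: "tb < t" "t < ta"
    have "0 \<le> sin t * mth t" using sinpos[OF t] mth_bounds(1)[OF sinpos[OF t]] by simp
    then show "\<exists>y. ((\<lambda>t. - nth t) has_real_derivative y) (at t) \<and> 0 \<le> y"
      using D[OF t] by blast
  qed (intro continuous_intros nth_cont)
  then show "neta a \<le> neta b" using ab by (simp add: neta_nth ta_def tb_def)
  have D2: "((\<lambda>t. nth t - Kc * cos t) has_real_derivative sin t * (Kc - mth t)) (at t)" if "tb < t" "t < ta" for t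
  proof -
    have "((\<lambda>t. nth t - Kc * cos t) has_real_derivative (- sin t * mth t) - Kc * (- sin t)) (at t)"
      using nth_deriv[of t] deriv_ident[OF sinpos[OF that]]
      by (auto intro!: derivative_eq_intros)
    then show ?thesis by (simp add: algebra_simps)
  qed
  have "nth tb - Kc * cos tb \<le> nth ta - Kc * cos ta"
  proof (rule DERIV_nonneg_imp_increasing_open[OF tab])
    fix t assume t: "tb < t" "t < ta"
    have "0 \<le> sin t * (Kc - mth t)" using sinpos[OF t] mth_bounds(2)[OF sinpos[OF t]] by simp
    then show "\<exists>y. ((\<lambda>t. nth t - Kc * cos t) has_real_derivative y) (at t) \<and> 0 \<le> y"
      using D2[OF t] by blast
  qed (intro continuous_intros nth_cont)
  then show "neta b - neta a \<le> (b - a) * Kc" using ab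
    by (simp add: neta_nth ta_def tb_def algebra_simps)
qed

lemma neta_zero: "0 \<le> neta 0"
proof -
  have i: "integrable N2 (\<lambda>w. f (fst w) * f (snd w))"
    by (rule bounded_int_N2[where C="B * B"]) (use fb in \<open>auto simp: abs_mult intro!: mult_mono order_trans[OF abs_ge_zero fb]\<close>)
  have "neta 0 = (\<integral>w. f (fst w) * f (snd w) \<partial>N2)" unfolding neta_def by simp
  also have "\<dots> = (\<integral>x. \<integral>y. f x * f y \<partial>stdN \<partial>stdN)"
    using N2.integral_fst'[OF i] by simp
  also have "\<dots> = (\<integral>x. f x \<partial>stdN) * (\<integral>x. f x \<partial>stdN)"
    by simp
  finally show ?thesis by simp
qed

end



locale proxloc =
  fixes \<rho> :: "real \<Rightarrow> real" and \<gamma> :: real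
  assumes r1d: "\<forall>t. \<rho> differentiable (at t)" and r2d: "\<forall>t. deriv \<rho> differentiable (at t)"
    and r2c: "continuous_on UNIV (deriv (deriv \<rho>))"
    and r1b: "\<forall>t. \<bar>deriv \<rho> t\<bar> \<le> 1"
    and r2b: "\<forall>t. 0 < deriv (deriv \<rho>) t \<and> deriv (deriv \<rho>) t \<le> 1"
    and gpos: "0 < \<gamma>"
begin

lemma R1: "(\<rho> has_real_derivative deriv \<rho> t) (at t)"
  using r1d DERIV_deriv_iff_real_differentiable by blast

lemma R2: "(deriv \<rho> has_real_derivative deriv (deriv \<rho>) t) (at t)"
  using r2d DERIV_deriv_iff_real_differentiable by blast

lemma r1_cont: "continuous_on UNIV (deriv \<rho>)"
  using R2 by (meson DERIV_isCont continuous_at_imp_continuous_on)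

lemma r1_mvt: "\<exists>k. 0 \<le> k \<and> k \<le> 1 \<and> deriv \<rho> a - deriv \<rho> b = k * (a - b)"
proof (cases "a = b")
  case True then show ?thesis by (intro exI[of _ 0]) auto
next
  case False
  show ?thesis
  proof (cases "a < b")
    case True
    from MVT2[OF True, of "deriv \<rho>" "deriv (deriv \<rho>)"] R2 obtain z where
      "deriv \<rho> b - deriv \<rho> a = (b - a) * deriv (deriv \<rho>) z" by blast
    then show ?thesis using r2b by (intro exI[of _ "deriv (deriv \<rho>) z"]) (auto simp: algebra_simps less_imp_le)
  next
    case False
    then have "b < a" using \<open>a \<noteq> b\<close> by simp
    from MVT2[OF this, of "deriv \<rho>" "deriv (deriv \<rho>)"] R2 obtain z where
      "deriv \<rho> a - deriv \<rho> b = (a - b) * deriv (deriv \<rho>) z" by blast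
    then show ?thesis using r2b by (intro exI[of _ "deriv (deriv \<rho>) z"]) (auto simp: algebra_simps less_imp_le)
  qed
qed

definition hh :: "real \<Rightarrow> real \<Rightarrow> real" where "hh e p = p - \<gamma> * deriv \<rho> (e - p)"

lemma hh_cont: "continuous_on A (hh e)"
  unfolding hh_def by (intro continuous_intros continuous_on_compose2[OF r1_cont]) auto

lemma hh_strict: "p < q \<Longrightarrow> hh e p < hh e q"
proof -
  assume pq: "p < q"
  obtain k where k: "0 \<le> k" "k \<le> 1" "deriv \<rho> (e - p) - deriv \<rho> (e - q) = k * ((e - p) - (e - q))"
    using r1_mvt by blast
  moreover have "0 \<le> k * ((e - p) - (e - q))" using k pq by simp
  ultimately have "deriv \<rho> (e - q) \<le> deriv \<rho> (e - p)" by linarith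
  then have "\<gamma> * deriv \<rho> (e - q) \<le> \<gamma> * deriv \<rho> (e - p)" using gpos by (intro mult_left_mono) auto
  then show ?thesis unfolding hh_def using pq by linarith
qed

lemma hh_inj: "hh e p = hh e q \<Longrightarrow> p = q"
  using hh_strict by (metis linorder_neqE_linordered_idom order_less_irrefl)

lemma gb: "\<bar>\<gamma> * deriv \<rho> t\<bar> \<le> \<gamma>"
  using r1b gpos by (simp add: abs_mult mult_left_le_one_le)

lemma hh_root: "\<exists>p. hh e p = x"
proof -
  have "hh e (x - \<gamma>) \<le> x" unfolding hh_def using gb[of "e - (x - \<gamma>)"] by (simp add: abs_le_iff)
  moreover have "x \<le> hh e (x + \<gamma>)" unfolding hh_def using gb[of "e - (x + \<gamma>)"] by (simp add: abs_le_iff)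
  moreover have "x - \<gamma> \<le> x + \<gamma>" using gpos by simp
  ultimately obtain p where "hh e p = x" using IVT'[of "hh e" "x - \<gamma>" x "x + \<gamma>", OF _ _ _ hh_cont] by blast
  then show ?thesis by blast
qed

lemma prox_char:
  assumes hp: "hh e p = x"
  shows "prox (\<lambda>u. \<gamma> * rho_e \<rho> e u) x = p"
proof -
  define Phi where "Phi y = (x - y)\<^sup>2 / 2 + \<gamma> * rho_e \<rho> e y" for y
  have dPhi: "(Phi has_real_derivative (hh e y - x)) (at y)" for y
  proof -
    have a: "((\<lambda>y. (x - y)\<^sup>2 / 2) has_real_derivative (y - x)) (at y)"
      by (auto intro!: derivative_eq_intros simp: field_simps)
    have "((\<lambda>y. e - y) has_real_derivative (- 1)) (at y)"
      by (auto intro!: derivative_eq_intros)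
    from DERIV_chain2[OF R1 this] have b: "((\<lambda>y. \<rho> (e - y)) has_real_derivative deriv \<rho> (e - y) * (- 1)) (at y)" .
    have "(Phi has_real_derivative (y - x) + \<gamma> * (deriv \<rho> (e - y) * (- 1))) (at y)"
      unfolding Phi_def rho_e_def by (intro DERIV_add a DERIV_cmult b)
    then show ?thesis by (simp add: hh_def algebra_simps)
  qed
  have minp: "Phi p \<le> Phi y" for y
  proof (cases "p < y")
    case True
    from MVT2[OF True, of Phi "\<lambda>y. hh e y - x"] dPhi obtain z where z: "p < z" "z < y"
      "Phi y - Phi p = (y - p) * (hh e z - x)" by blast
    have "hh e p < hh e z" using z hh_strict by blast
    then have "0 \<le> (y - p) * (hh e z - x)" using True hp by simp
    then show ?thesis using z by linarith
  next
    case False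
    show ?thesis
    proof (cases "y < p")
      case True
      from MVT2[OF True, of Phi "\<lambda>y. hh e y - x"] dPhi obtain z where z: "y < z" "z < p"
        "Phi p - Phi y = (p - y) * (hh e z - x)" by blast
      have "hh e z < hh e p" using z hh_strict by blast
      then have "(p - y) * (hh e z - x) \<le> 0" using True hp by (simp add: mult_nonneg_nonpos)
      then show ?thesis using z by linarith
    next
      case False then show ?thesis using \<open>\<not> p < y\<close> by simp
    qed
  qed
  show ?thesis unfolding prox_def
  proof (rule the_equality)
    show "\<forall>y. (x - p)\<^sup>2 / 2 + \<gamma> * rho_e \<rho> e p \<le> (x - y)\<^sup>2 / 2 + \<gamma> * rho_e \<rho> e y"
      using minp unfolding Phi_def by blast
    fix q assume "\<forall>y. (x - q)\<^sup>2 / 2 + \<gamma> * rho_e \<rho> e q \<le> (x - y)\<^sup>2 / 2 + \<gamma> * rho_e \<rho> e y"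
    then have "\<forall>y. \<bar>q - y\<bar> < 1 \<longrightarrow> Phi q \<le> Phi y" unfolding Phi_def by blast
    from DERIV_local_min[OF dPhi _ this] have "hh e q = x" by simp
    then show "q = p" using hp by (metis hh_inj)
  qed
qed

definition PP :: "real \<Rightarrow> real \<Rightarrow> real" where "PP e x = prox (\<lambda>u. \<gamma> * rho_e \<rho> e u) x"

lemma hh_PP: "hh e (PP e x) = x"
  using hh_root[of e x] prox_char unfolding PP_def by metis

lemma resid_eq: "resid \<rho> \<gamma> e x = x - PP e x"
  unfolding resid_def PP_def by simp

lemma resid_eq2: "resid \<rho> \<gamma> e x = - \<gamma> * deriv \<rho> (e - PP e x)"
  using hh_PP[of e x] unfolding resid_eq hh_def by simp

lemma resid_bound: "\<bar>resid \<rho> \<gamma> e x\<bar> \<le> \<gamma>"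
  unfolding resid_eq2 using r1b gpos by (simp add: abs_mult mult_left_le_one_le)

lemma PP_lip: "\<bar>PP e x - PP e' x'\<bar> \<le> \<bar>x - x'\<bar> + \<bar>e - e'\<bar>"
proof -
  define p p' where "p = PP e x" and "p' = PP e' x'"
  have hx: "x = p - \<gamma> * deriv \<rho> (e - p)" using hh_PP[of e x] unfolding hh_def p_def by simp
  have hx': "x' = p' - \<gamma> * deriv \<rho> (e' - p')" using hh_PP[of e' x'] unfolding hh_def p'_def by simp
  obtain k where k: "0 \<le> k" "k \<le> 1" "deriv \<rho> (e - p) - deriv \<rho> (e' - p') = k * ((e - p) - (e' - p'))"
    using r1_mvt by blast
  have gk: "0 \<le> \<gamma> * k" using gpos k by simp
  have "x - x' = (p - p') - \<gamma> * (deriv \<rho> (e - p) - deriv \<rho> (e' - p'))"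
    using hx hx' by (simp add: algebra_simps)
  also have "\<dots> = (p - p') - \<gamma> * (k * ((e - p) - (e' - p')))" by (simp add: k(3))
  finally have eq: "(p - p') * (1 + \<gamma> * k) = (x - x') + \<gamma> * k * (e - e')"
    by (simp add: algebra_simps)
  have "\<bar>p - p'\<bar> * (1 + \<gamma> * k) = \<bar>(p - p') * (1 + \<gamma> * k)\<bar>"
    using gk by (simp add: abs_mult)
  also have "\<dots> = \<bar>(x - x') + \<gamma> * k * (e - e')\<bar>" by (simp add: eq)
  also have "\<dots> \<le> \<bar>x - x'\<bar> + \<bar>\<gamma> * k * (e - e')\<bar>" by (rule abs_triangle_ineq)
  also have "\<bar>x - x'\<bar> + \<bar>\<gamma> * k * (e - e')\<bar> = \<bar>x - x'\<bar> + \<gamma> * k * \<bar>e - e'\<bar>" by (simp only: abs_mult[of "\<gamma> * k"] abs_of_nonneg[OF gk])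
  also have "\<dots> \<le> (\<bar>x - x'\<bar> + \<bar>e - e'\<bar>) * (1 + \<gamma> * k)"
  proof -
    have "(\<bar>x - x'\<bar> + \<bar>e - e'\<bar>) * (1 + \<gamma> * k) = \<bar>x - x'\<bar> + \<gamma> * k * \<bar>e - e'\<bar> + (\<bar>e - e'\<bar> + \<gamma> * k * \<bar>x - x'\<bar>)"
      by (simp add: algebra_simps)
    moreover have "0 \<le> \<bar>e - e'\<bar> + \<gamma> * k * \<bar>x - x'\<bar>" using gk by simp
    ultimately show ?thesis by linarith
  qed
  finally have "\<bar>p - p'\<bar> * (1 + \<gamma> * k) \<le> (\<bar>x - x'\<bar> + \<bar>e - e'\<bar>) * (1 + \<gamma> * k)" .
  moreover have "0 < 1 + \<gamma> * k" using gk by simp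
  ultimately show ?thesis unfolding p_def p'_def by (simp add: mult_le_cancel_right_pos)
qed

lemma PP_cont: "continuous_on UNIV (\<lambda>w. PP (fst w) (snd w))"
proof (rule lipschitz_on_continuous_on[where L=2], rule lipschitz_onI)
  fix w w' :: "real \<times> real"
  have "dist (PP (fst w) (snd w)) (PP (fst w') (snd w')) \<le> dist (snd w) (snd w') + dist (fst w) (fst w')"
    using PP_lip by (simp add: dist_real_def)
  also have "\<dots> \<le> 2 * dist w w'" using dist_fst_le[of w w'] dist_snd_le[of w w'] by simp
  finally show "dist (PP (fst w) (snd w)) (PP (fst w') (snd w')) \<le> 2 * dist w w'" .
qed simp

lemma PP_cont1: "continuous_on UNIV (PP e)"
proof -
  have "continuous_on UNIV ((\<lambda>w. PP (fst w) (snd w)) \<circ> (\<lambda>x. (e, x)))"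
    by (rule continuous_on_compose) (auto intro: continuous_intros continuous_on_subset[OF PP_cont])
  then show ?thesis by (simp add: comp_def)
qed

definition kap :: "real \<Rightarrow> real \<Rightarrow> real" where
  "kap e x = \<gamma> * deriv (deriv \<rho>) (e - PP e x) / (1 + \<gamma> * deriv (deriv \<rho>) (e - PP e x))"

lemma gr2pos: "0 < \<gamma> * deriv (deriv \<rho>) t"
  using r2b gpos by simp

lemma kap_bounds: "0 \<le> kap e x \<and> kap e x \<le> 1"
proof -
  have "0 < \<gamma> * deriv (deriv \<rho>) (e - PP e x)" using r2b gpos by simp
  then show ?thesis unfolding kap_def by (simp add: divide_le_eq)
qed

lemma resid_deriv: "(resid \<rho> \<gamma> e has_real_derivative kap e x) (at x)"
proof -
  have dh: "(hh e has_real_derivative (1 + \<gamma> * deriv (deriv \<rho>) (e - PP e x))) (at (PP e x))"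
  proof -
    have "((\<lambda>y. e - y) has_real_derivative (- 1)) (at (PP e x))"
      by (auto intro!: derivative_eq_intros)
    from DERIV_chain2[OF R2 this] have b: "((\<lambda>y. deriv \<rho> (e - y)) has_real_derivative deriv (deriv \<rho>) (e - PP e x) * (- 1)) (at (PP e x))" .
    have "(hh e has_real_derivative 1 - \<gamma> * (deriv (deriv \<rho>) (e - PP e x) * (- 1))) (at (PP e x))"
      unfolding hh_def[abs_def] by (intro DERIV_diff DERIV_ident DERIV_cmult b)
    then show ?thesis by simp
  qed
  have pos: "1 + \<gamma> * deriv (deriv \<rho>) (e - PP e x) \<noteq> 0"
    using gr2pos by (smt (verit))
  have dP: "(PP e has_real_derivative inverse (1 + \<gamma> * deriv (deriv \<rho>) (e - PP e x))) (at x)"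
  proof -
    have h1: "\<And>y. x - 1 < y \<Longrightarrow> y < x + 1 \<Longrightarrow> hh e (PP e y) = y" using hh_PP by simp
    have h2: "isCont (PP e) x" using PP_cont1 by (simp add: continuous_on_eq_continuous_at)
    have h3: "x - 1 < x" "x < x + 1" by simp_all
    show ?thesis using DERIV_inverse_function[OF dh pos h3 h1 h2] .
  qed
  have "((\<lambda>x. x - PP e x) has_real_derivative 1 - inverse (1 + \<gamma> * deriv (deriv \<rho>) (e - PP e x))) (at x)"
    using DERIV_diff[OF DERIV_ident dP] by simp
  moreover have "1 - inverse (1 + \<gamma> * deriv (deriv \<rho>) (e - PP e x)) = kap e x"
    unfolding kap_def using pos by (simp add: field_simps)
  ultimately show ?thesis unfolding resid_eq[abs_def] by simp
qed

lemma kap_cont: "continuous_on UNIV (\<lambda>w. kap (fst w) (snd w))"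
proof -
  have c1: "continuous_on UNIV (\<lambda>w. deriv (deriv \<rho>) (fst w - PP (fst w) (snd w)))"
    by (intro continuous_on_compose2[OF r2c] continuous_intros PP_cont) auto
  have "1 + \<gamma> * deriv (deriv \<rho>) (fst w - PP (fst w) (snd w)) \<noteq> 0" for w
    using gr2pos by (smt (verit))
  then show ?thesis unfolding kap_def by (intro continuous_intros c1) auto
qed

lemma resid_cont: "continuous_on UNIV (\<lambda>w. resid \<rho> \<gamma> (fst w) (snd w))"
  unfolding resid_eq by (intro continuous_intros PP_cont)

lemma resid_meas_pair: "(\<lambda>w. resid \<rho> \<gamma> (fst w) (snd w)) \<in> borel_measurable (borel \<Otimes>\<^sub>M borel)"
  unfolding borel_prod using resid_cont by (rule borel_measurable_continuous_onI)

lemma kap_meas_pair: "(\<lambda>w. kap (fst w) (snd w)) \<in> borel_measurable (borel \<Otimes>\<^sub>M borel)"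
  unfolding borel_prod using kap_cont by (rule borel_measurable_continuous_onI)

lemma resid_meas[measurable (raw)]:
  "f \<in> borel_measurable M \<Longrightarrow> g \<in> borel_measurable M \<Longrightarrow> (\<lambda>w. resid \<rho> \<gamma> (f w) (g w)) \<in> borel_measurable M"
  using measurable_compose[OF measurable_Pair resid_meas_pair, of f M g] by simp

lemma kap_meas[measurable (raw)]:
  "f \<in> borel_measurable M \<Longrightarrow> g \<in> borel_measurable M \<Longrightarrow> (\<lambda>w. kap (f w) (g w)) \<in> borel_measurable M"
  using measurable_compose[OF measurable_Pair kap_meas_pair, of f M g] by simp

end



lemma prob_integral_abs_le:
  fixes f :: "'a \<Rightarrow> real"
  assumes M: "prob_space M" and b: "\<And>x. x \<in> space M \<Longrightarrow> \<bar>f x\<bar> \<le> K"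
  shows "\<bar>integral\<^sup>L M f\<bar> \<le> K"
proof -
  interpret M: prob_space M by (rule M)
  obtain x where x: "x \<in> space M" using M.not_empty by blast
  have K0: "0 \<le> K" using b[OF x] by simp
  show ?thesis
  proof (cases "integrable M f")
    case True
    have "\<bar>integral\<^sup>L M f\<bar> \<le> (\<integral>x. \<bar>f x\<bar> \<partial>M)" by (rule integral_abs_bound)
    also have "\<dots> \<le> (\<integral>x. K \<partial>M)"
      using True b by (intro integral_mono) auto
    also have "\<dots> = K" by (simp add: M.prob_space)
    finally show ?thesis .
  next
    case False
    then show ?thesis using K0 by (simp add: not_integrable_integral_eq)
  qed
qed

lemma double_fub:
  fixes H :: "real \<Rightarrow> 'c \<Rightarrow> real"
  assumes C: "prob_space C" and Hi: "integrable (stdN \<Otimes>\<^sub>M C) (\<lambda>(g, e). H g e)"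
  shows "(\<integral>w. (case w of (g, e) \<Rightarrow> H g e) \<partial>(stdN \<Otimes>\<^sub>M C)) = (\<integral>e. \<integral>g. H g e \<partial>stdN \<partial>C)"
proof -
  interpret C: prob_space C by (rule C)
  interpret P2: pair_prob_space stdN C
    by (simp add: pair_prob_space_def pair_sigma_finite_def prob_space_stdN C prob_space_imp_sigma_finite)
  show ?thesis using P2.integral_snd[OF Hi] by simp
qed

lemma fst_integrable_pair:
  fixes k :: "real \<Rightarrow> real"
  assumes C: "prob_space C" and [measurable]: "k \<in> borel_measurable borel" and "integrable stdN k"
  shows "integrable (stdN \<Otimes>\<^sub>M C) (\<lambda>w. k (fst w))" "(\<integral>w. k (fst w) \<partial>(stdN \<Otimes>\<^sub>M C)) = integral\<^sup>L stdN k"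
proof -
  have d: "distr (stdN \<Otimes>\<^sub>M C) stdN fst = stdN" by (rule prob_space.distr_pair_fst[OF C])
  have km: "k \<in> borel_measurable stdN" using assms(2) by (simp add: measurable_cong_sets[OF sets_stdN refl])
  have "integrable (distr (stdN \<Otimes>\<^sub>M C) stdN fst) k" using assms(3) by (simp add: d)
  then show "integrable (stdN \<Otimes>\<^sub>M C) (\<lambda>w. k (fst w))" by (subst (asm) integrable_distr_eq) (auto simp: km)
  have "(\<integral>w. k (fst w) \<partial>(stdN \<Otimes>\<^sub>M C)) = integral\<^sup>L (distr (stdN \<Otimes>\<^sub>M C) stdN fst) k"
    by (subst integral_distr) (auto simp: km)
  then show "(\<integral>w. k (fst w) \<partial>(stdN \<Otimes>\<^sub>M C)) = integral\<^sup>L stdN k" by (simp add: d)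
qed

lemma triple_fub:
  fixes H :: "real \<Rightarrow> real \<Rightarrow> 'c \<Rightarrow> real"
  assumes C: "prob_space C"
    and Hm[measurable]: "(\<lambda>w. H (fst w) (fst (snd w)) (snd (snd w))) \<in> borel_measurable (stdN \<Otimes>\<^sub>M (stdN \<Otimes>\<^sub>M C))"
    and Hb: "\<And>g z e. \<bar>H g z e\<bar> \<le> K"
  shows "(\<integral>w. (case w of (g, z, e) \<Rightarrow> H g z e) \<partial>(stdN \<Otimes>\<^sub>M (stdN \<Otimes>\<^sub>M C)))
       = (\<integral>e. (\<integral>w. H (fst w) (snd w) e \<partial>N2) \<partial>C)"
proof -
  interpret C: prob_space C by (rule C)
  interpret P2: pair_prob_space stdN C
    by (simp add: pair_prob_space_def pair_sigma_finite_def prob_space_stdN C prob_space_imp_sigma_finite)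
  interpret P1: pair_prob_space stdN "stdN \<Otimes>\<^sub>M C"
    by (simp add: pair_prob_space_def pair_sigma_finite_def prob_space_stdN P2.P.prob_space_axioms prob_space_imp_sigma_finite)
  interpret P3: pair_prob_space "stdN \<Otimes>\<^sub>M C" stdN
    by (simp add: pair_prob_space_def pair_sigma_finite_def prob_space_stdN P2.P.prob_space_axioms prob_space_imp_sigma_finite)
  have eqc: "(\<lambda>w. case w of (g, z, e) \<Rightarrow> H g z e) = (\<lambda>w. H (fst w) (fst (snd w)) (snd (snd w)))"
    by (auto simp: fun_eq_iff split: prod.splits)
  have i1: "integrable (stdN \<Otimes>\<^sub>M (stdN \<Otimes>\<^sub>M C)) (\<lambda>(g, v). H g (fst v) (snd v))"
    by (rule P1.P.integrable_const_bound[where B=K]) (use Hb in \<open>auto simp: case_prod_unfold\<close>)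
  have "(\<integral>w. (case w of (g, z, e) \<Rightarrow> H g z e) \<partial>(stdN \<Otimes>\<^sub>M (stdN \<Otimes>\<^sub>M C)))
      = (\<integral>g. \<integral>v. H g (fst v) (snd v) \<partial>(stdN \<Otimes>\<^sub>M C) \<partial>stdN)"
    using P1.integral_fst[OF i1] by (simp add: eqc case_prod_unfold)
  also have "\<dots> = (\<integral>g. \<integral>e. \<integral>z. H g z e \<partial>stdN \<partial>C \<partial>stdN)"
  proof (intro Bochner_Integration.integral_cong refl)
    fix g
    have mg: "(\<lambda>p. H g (fst p) (snd p)) \<in> borel_measurable (stdN \<Otimes>\<^sub>M C)"
    proof -
      have "(\<lambda>p. (g, p)) \<in> measurable (stdN \<Otimes>\<^sub>M C) (stdN \<Otimes>\<^sub>M (stdN \<Otimes>\<^sub>M C))" by measurable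
      from measurable_compose[OF this Hm] show ?thesis by simp
    qed
    have i2: "integrable (stdN \<Otimes>\<^sub>M C) (\<lambda>(z, e). H g z e)"
      by (rule P2.P.integrable_const_bound[where B=K]) (use Hb mg in \<open>auto simp: case_prod_unfold\<close>)
    show "(\<integral>v. H g (fst v) (snd v) \<partial>(stdN \<Otimes>\<^sub>M C)) = (\<integral>e. \<integral>z. H g z e \<partial>stdN \<partial>C)"
      using P2.integral_snd[OF i2] by (simp add: case_prod_unfold)
  qed
  also have "\<dots> = (\<integral>e. \<integral>g. \<integral>z. H g z e \<partial>stdN \<partial>stdN \<partial>C)"
  proof (rule P2.Fubini_integral[symmetric])
    have m: "(\<lambda>w. \<integral>z. H (fst w) z (snd w) \<partial>stdN) \<in> borel_measurable (stdN \<Otimes>\<^sub>M C)"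
    proof (rule stdN.borel_measurable_lebesgue_integral)
      have "(\<lambda>p. (fst (fst p), (snd p, snd (fst p)))) \<in> measurable ((stdN \<Otimes>\<^sub>M C) \<Otimes>\<^sub>M stdN) (stdN \<Otimes>\<^sub>M (stdN \<Otimes>\<^sub>M C))"
        by measurable
      from measurable_compose[OF this Hm]
      show "(\<lambda>(x, y). H (fst x) y (snd x)) \<in> borel_measurable ((stdN \<Otimes>\<^sub>M C) \<Otimes>\<^sub>M stdN)"
        by (simp add: case_prod_unfold)
    qed
    show "integrable (stdN \<Otimes>\<^sub>M C) (\<lambda>(g, e). \<integral>z. H g z e \<partial>stdN)"
    proof (rule P2.P.integrable_const_bound[where B=K])
      show "AE x in stdN \<Otimes>\<^sub>M C. norm (case x of (g, e) \<Rightarrow> \<integral>z. H g z e \<partial>stdN) \<le> K"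
      proof (intro AE_I2)
        fix x :: "real \<times> 'c"
        have "\<bar>\<integral>z. H (fst x) z (snd x) \<partial>stdN\<bar> \<le> K"
          by (rule prob_integral_abs_le[OF prob_space_stdN]) (use Hb in auto)
        then show "norm (case x of (g, e) \<Rightarrow> \<integral>z. H g z e \<partial>stdN) \<le> K"
          by (simp add: case_prod_unfold)
      qed
    qed (use m in \<open>simp add: case_prod_unfold\<close>)
  qed
  also have "\<dots> = (\<integral>e. (\<integral>w. H (fst w) (snd w) e \<partial>N2) \<partial>C)"
  proof (intro Bochner_Integration.integral_cong refl)
    fix e assume e: "e \<in> space C"
    have me: "(\<lambda>p. H (fst p) (snd p) e) \<in> borel_measurable N2"
    proof -
      have "(\<lambda>p. (fst p, (snd p, e))) \<in> measurable N2 (stdN \<Otimes>\<^sub>M (stdN \<Otimes>\<^sub>M C))"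
        using e by measurable
      from measurable_compose[OF this Hm] show ?thesis by simp
    qed
    have i3: "integrable N2 (\<lambda>(g, z). H g z e)"
      by (rule N2.P.integrable_const_bound[where B=K]) (use Hb me in \<open>auto simp: case_prod_unfold\<close>)
    show "(\<integral>g. \<integral>z. H g z e \<partial>stdN \<partial>stdN) = (\<integral>w. H (fst w) (snd w) e \<partial>N2)"
      using N2.integral_fst[OF i3] by (simp add: case_prod_unfold)
  qed
  finally show ?thesis .
qed



theorem mainTheorem1:
  fixes q \<delta> \<sigma> \<gamma> :: real and \<rho> :: "real \<Rightarrow> real" and Pe :: "real measure"
  assumes q: "0 < q" "q < 1" and \<delta>: "1 < \<delta>" "1 < q * \<delta>"
    and \<rho>_C2: "\<forall>t. \<rho> differentiable (at t)" "\<forall>t. deriv \<rho> differentiable (at t)"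
        "continuous_on UNIV (deriv (deriv \<rho>))"
    and \<rho>_argmin: "{x. \<forall>y. \<rho> x \<le> \<rho> y} = {0}"
    and \<rho>_d1: "\<forall>t. \<bar>deriv \<rho> t\<bar> \<le> 1"
    and \<rho>_d2: "\<forall>t. 0 < deriv (deriv \<rho>) t \<and> deriv (deriv \<rho>) t \<le> 1"
    and Pe: "prob_space Pe" "sets Pe = sets borel" "measure Pe (UNIV - {0}) > 0"
    and sg: "0 < \<sigma>" "0 < \<gamma>" "sys_holds Pe \<rho> q \<delta> \<sigma> \<gamma>"
    and uniq: "\<forall>s g. 0 < s \<and> 0 < g \<and> sys_holds Pe \<rho> q \<delta> s g \<longrightarrow> s = \<sigma> \<and> g = \<gamma>"
  shows "mono_on {-1..1} (Ffun Pe \<rho> q \<sigma> \<gamma>)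
    \<and> (\<forall>x\<in>{-1..1}. \<forall>y\<in>{-1..1}. \<bar>Ffun Pe \<rho> q \<sigma> \<gamma> x - Ffun Pe \<rho> q \<sigma> \<gamma> y\<bar> \<le> q * \<bar>x - y\<bar>)
    \<and> 0 \<le> Ffun Pe \<rho> q \<sigma> \<gamma> 0 \<and> Ffun Pe \<rho> q \<sigma> \<gamma> 0 \<le> q \<and> q \<le> 1
    \<and> Ffun Pe \<rho> q \<sigma> \<gamma> 1 = q
    \<and> (\<exists>!\<eta>. \<eta> \<in> {-1..1} \<and> Ffun Pe \<rho> q \<sigma> \<gamma> \<eta> = \<eta>)
    \<and> (\<forall>\<eta>\<in>{-1..1}. Ffun Pe \<rho> q \<sigma> \<gamma> \<eta> = \<eta> \<longrightarrow> \<eta> \<in> {0..q})"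
proof -
  interpret PL: proxloc \<rho> \<gamma>
    using \<rho>_C2 \<rho>_d1 \<rho>_d2 sg(2) by unfold_locales auto
  interpret Pe: prob_space Pe by (rule Pe(1))
  note PeS[measurable_cong] = Pe(2)
  interpret SP: pair_prob_space stdN Pe
    by (simp add: pair_prob_space_def pair_sigma_finite_def prob_space_stdN Pe(1) prob_space_imp_sigma_finite)
  define f where "f e x = resid \<rho> \<gamma> e (\<sigma> * x)" for e x
  define f' where "f' e x = PL.kap e (\<sigma> * x) * \<sigma>" for e x
  have GC: "gcore (f e) (f' e) \<gamma> \<sigma>" for e
  proof
    fix x
    have "((\<lambda>x. \<sigma> * x) has_real_derivative \<sigma>) (at x)" by (auto intro!: derivative_eq_intros)
    from DERIV_chain2[OF PL.resid_deriv this]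
    show "(f e has_real_derivative f' e x) (at x)" unfolding f_def[abs_def] f'_def by simp
    show "\<bar>f e x\<bar> \<le> \<gamma>" unfolding f_def by (rule PL.resid_bound)
    show "0 \<le> f' e x \<and> f' e x \<le> \<sigma>" unfolding f'_def using PL.kap_bounds[of e "\<sigma> * x"] sg(1)
      by (auto simp: mult_left_le_one_le)
  next
    have "continuous_on UNIV ((\<lambda>w. PL.kap (fst w) (snd w)) \<circ> (\<lambda>x. (e, \<sigma> * x)))"
      by (rule continuous_on_compose) (auto intro: continuous_intros continuous_on_subset[OF PL.kap_cont])
    then show "continuous_on UNIV (f' e)" unfolding f'_def[abs_def]
      by (auto simp: comp_def intro!: continuous_intros)
  qed
  have g0: "0 \<le> \<gamma>" using sg(2) by simp
  have rb: "\<bar>resid \<rho> \<gamma> e x\<bar> \<le> \<gamma>" for e x by (rule PL.resid_bound)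
  have rb2: "\<bar>resid \<rho> \<gamma> e x * resid \<rho> \<gamma> e' y\<bar> \<le> \<gamma> * \<gamma>" for e e' x y
    unfolding abs_mult by (intro mult_mono rb) (auto simp: g0)
  have rb3: "\<bar>(resid \<rho> \<gamma> e x)\<^sup>2\<bar> \<le> \<gamma> * \<gamma>" for e x
    using rb2[of e x e x] by (simp add: power2_eq_square)
  define Num where "Num \<eta> = (\<integral>w. (case w of (g, z, e) \<Rightarrow> resid \<rho> \<gamma> e (\<sigma> * g) * resid \<rho> \<gamma> e (\<sigma> * (\<eta> * g + sqrt (1 - \<eta>\<^sup>2) * z))) \<partial>(stdN \<Otimes>\<^sub>M (stdN \<Otimes>\<^sub>M Pe)))" for \<eta>
  define Den where "Den = (\<integral>w. (case w of (g, e) \<Rightarrow> (resid \<rho> \<gamma> e (\<sigma> * g))\<^sup>2) \<partial>(stdN \<Otimes>\<^sub>M Pe))"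
  have Fdef: "Ffun Pe \<rho> q \<sigma> \<gamma> \<eta> = q * Num \<eta> / Den" for \<eta>
    unfolding Ffun_def Num_def Den_def by simp
  have sys1: "\<sigma>\<^sup>2 / (q * \<delta>) = Den" and sys2: "1 - 1 / (q * \<delta>) = (1 / \<sigma>) * (\<integral>w. (case w of (g, e) \<Rightarrow>
        g * prox (\<lambda>u. \<gamma> * rho_e \<rho> e u) (\<sigma> * g)) \<partial>(stdN \<Otimes>\<^sub>M Pe))"
    using sg(3) unfolding sys_holds_def Den_def by auto
  have Den_pos: "0 < Den" unfolding sys1[symmetric] using sg(1) q \<delta> by simp
  have neta_eq: "gcore.neta (f e) \<eta> = (\<integral>w. resid \<rho> \<gamma> e (\<sigma> * fst w) * resid \<rho> \<gamma> e (\<sigma> * (\<eta> * fst w + sqrt (1 - \<eta>\<^sup>2) * snd w)) \<partial>N2)" for e \<eta>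
    using gcore.neta_def[OF GC[of e], of \<eta>] unfolding f_def by simp
  have NumG: "Num \<eta> = (\<integral>e. gcore.neta (f e) \<eta> \<partial>Pe)" for \<eta>
  proof -
    have "Num \<eta> = (\<integral>e. (\<integral>w. resid \<rho> \<gamma> e (\<sigma> * fst w) * resid \<rho> \<gamma> e (\<sigma> * (\<eta> * fst w + sqrt (1 - \<eta>\<^sup>2) * snd w)) \<partial>N2) \<partial>Pe)"
      unfolding Num_def
      by (rule triple_fub[OF Pe(1), where K="\<gamma> * \<gamma>"]) (measurable, rule rb2)
    then show ?thesis by (simp add: neta_eq)
  qed
  have Gm: "(\<lambda>e. gcore.neta (f e) \<eta>) \<in> borel_measurable Pe" for \<eta>
  proof -
    have "(\<lambda>e. \<integral>w. resid \<rho> \<gamma> e (\<sigma> * fst w) * resid \<rho> \<gamma> e (\<sigma> * (\<eta> * fst w + sqrt (1 - \<eta>\<^sup>2) * snd w)) \<partial>N2) \<in> borel_measurable Pe"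
      by measurable
    then show ?thesis by (simp add: neta_eq)
  qed
  have Gint: "integrable Pe (\<lambda>e. gcore.neta (f e) \<eta>)" for \<eta>
  proof (rule Pe.integrable_const_bound[where B="\<gamma> * \<gamma>"])
    show "AE e in Pe. norm (gcore.neta (f e) \<eta>) \<le> \<gamma> * \<gamma>"
    proof (intro AE_I2)
      fix e
      have "\<bar>gcore.neta (f e) \<eta>\<bar> \<le> \<gamma> * \<gamma>" unfolding neta_eq
        by (rule prob_integral_abs_le[OF N2.P.prob_space_axioms]) (rule rb2)
      then show "norm (gcore.neta (f e) \<eta>) \<le> \<gamma> * \<gamma>" by simp
    qed
  qed (rule Gm)
  have Kc_eq: "gcore.Kc (f' e) = (\<integral>x. (PL.kap e (\<sigma> * x) * \<sigma>)\<^sup>2 \<partial>stdN)" for e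
    using gcore.Kc_def[OF GC[of e]] unfolding f'_def by simp
  have kb: "\<bar>(PL.kap e x * \<sigma>)\<^sup>2\<bar> \<le> \<sigma> * \<sigma>" for e x
    using PL.kap_bounds[of e x] sg(1) by (simp add: power2_eq_square mult_le_one mult_mono)
  have Kint: "integrable Pe (\<lambda>e. gcore.Kc (f' e))"
  proof (rule Pe.integrable_const_bound[where B="\<sigma> * \<sigma>"])
    show "AE e in Pe. norm (gcore.Kc (f' e)) \<le> \<sigma> * \<sigma>"
    proof (intro AE_I2)
      fix e
      have "\<bar>gcore.Kc (f' e)\<bar> \<le> \<sigma> * \<sigma>" unfolding Kc_eq
        by (rule prob_integral_abs_le[OF prob_space_stdN]) (rule kb)
      then show "norm (gcore.Kc (f' e)) \<le> \<sigma> * \<sigma>" by simp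
    qed
    show "(\<lambda>e. gcore.Kc (f' e)) \<in> borel_measurable Pe" unfolding Kc_eq by measurable
  qed
  have Hi: "integrable (stdN \<Otimes>\<^sub>M Pe) (\<lambda>(g, e). g * resid \<rho> \<gamma> e (\<sigma> * g))"
  proof (rule Bochner_Integration.integrable_bound[where f="\<lambda>w. \<gamma> * \<bar>fst w\<bar>"])
    show "integrable (stdN \<Otimes>\<^sub>M Pe) (\<lambda>w. \<gamma> * \<bar>fst w\<bar>)"
      using fst_integrable_pair(1)[OF Pe(1), of abs] integrable_stdN_abs by simp
    show "AE w in stdN \<Otimes>\<^sub>M Pe. norm (case w of (g, e) \<Rightarrow> g * resid \<rho> \<gamma> e (\<sigma> * g)) \<le> norm (\<gamma> * \<bar>fst w\<bar>)"
    proof (intro AE_I2)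
      fix w :: "real \<times> real"
      have "\<bar>fst w\<bar> * \<bar>resid \<rho> \<gamma> (snd w) (\<sigma> * fst w)\<bar> \<le> \<bar>fst w\<bar> * \<gamma>"
        by (intro mult_left_mono rb) auto
      then show "norm (case w of (g, e) \<Rightarrow> g * resid \<rho> \<gamma> e (\<sigma> * g)) \<le> norm (\<gamma> * \<bar>fst w\<bar>)"
        using g0 by (simp add: case_prod_unfold abs_mult mult.commute)
    qed
  qed measurable
  define Se where "Se e = (\<integral>x. x * f e x \<partial>stdN)" for e
  have Sint: "integrable Pe Se"
    using SP.integrable_snd[OF Hi] unfolding Se_def f_def by simp
  have Stot: "(\<integral>e. Se e \<partial>Pe) = \<sigma> / (q * \<delta>)"
  proof -
    have St: "(\<integral>e. Se e \<partial>Pe) = (\<integral>w. (case w of (g, e) \<Rightarrow> g * resid \<rho> \<gamma> e (\<sigma> * g)) \<partial>(stdN \<Otimes>\<^sub>M Pe))"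
      unfolding Se_def f_def using SP.integral_snd[OF Hi] by simp
    have sq: "integrable (stdN \<Otimes>\<^sub>M Pe) (\<lambda>w. (fst w)\<^sup>2)" "(\<integral>w. (fst w)\<^sup>2 \<partial>(stdN \<Otimes>\<^sub>M Pe)) = 1"
      using fst_integrable_pair[OF Pe(1), of "\<lambda>x. x\<^sup>2"] integrable_stdN_sq integral_stdN_sq by auto
    have "(\<integral>w. (case w of (g, e) \<Rightarrow> g * prox (\<lambda>u. \<gamma> * rho_e \<rho> e u) (\<sigma> * g)) \<partial>(stdN \<Otimes>\<^sub>M Pe))
        = (\<integral>w. \<sigma> * (fst w)\<^sup>2 - (case w of (g, e) \<Rightarrow> g * resid \<rho> \<gamma> e (\<sigma> * g)) \<partial>(stdN \<Otimes>\<^sub>M Pe))"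
      by (intro Bochner_Integration.integral_cong refl) (auto simp: resid_def power2_eq_square algebra_simps)
    also have "\<dots> = \<sigma> - (\<integral>e. Se e \<partial>Pe)"
      using sq Hi St by simp
    finally have "1 - 1 / (q * \<delta>) = (1 / \<sigma>) * (\<sigma> - (\<integral>e. Se e \<partial>Pe))" using sys2 by simp
    then show ?thesis using sg(1) by (simp add: field_simps)
  qed
  have Kc_le: "gcore.Kc (f' e) \<le> \<sigma> * Se e" for e
    using gcore.Kc_bound[OF GC[of e]] unfolding Se_def by simp
  have mainineq: "Num a \<le> Num b \<and> Num b - Num a \<le> (b - a) * Den" if ab: "-1 \<le> a" "a \<le> b" "b \<le> 1" for a b
  proof -
    have diff: "Num b - Num a = (\<integral>e. gcore.neta (f e) b - gcore.neta (f e) a \<partial>Pe)"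
      unfolding NumG using Gint by simp
    have n0: "0 \<le> (\<integral>e. gcore.neta (f e) b - gcore.neta (f e) a \<partial>Pe)"
      using gcore.core_mono(1)[OF GC ab] by (intro Bochner_Integration.integral_nonneg) simp
    have n1: "(\<integral>e. gcore.neta (f e) b - gcore.neta (f e) a \<partial>Pe) \<le> (\<integral>e. (b - a) * (\<sigma> * Se e) \<partial>Pe)"
    proof (rule integral_mono)
      show "integrable Pe (\<lambda>e. gcore.neta (f e) b - gcore.neta (f e) a)" using Gint by simp
      show "integrable Pe (\<lambda>e. (b - a) * (\<sigma> * Se e))" using Sint by simp
      fix e
      have "gcore.neta (f e) b - gcore.neta (f e) a \<le> (b - a) * gcore.Kc (f' e)"
        by (rule gcore.core_mono(2)[OF GC ab])
      also have "\<dots> \<le> (b - a) * (\<sigma> * Se e)" using ab Kc_le[of e] by (intro mult_left_mono) auto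
      finally show "gcore.neta (f e) b - gcore.neta (f e) a \<le> (b - a) * (\<sigma> * Se e)" .
    qed
    have n2: "(\<integral>e. (b - a) * (\<sigma> * Se e) \<partial>Pe) = (b - a) * Den"
    proof -
      have sD: "\<sigma> * (\<integral>e. Se e \<partial>Pe) = Den" using Stot sys1 by (simp add: power2_eq_square)
      have "(\<integral>e. (b - a) * (\<sigma> * Se e) \<partial>Pe) = (b - a) * (\<sigma> * (\<integral>e. Se e \<partial>Pe))" by simp
      then show ?thesis using sD by simp
    qed
    show ?thesis using diff n0 n1 n2 by linarith
  qed
  have Num1: "Num 1 = Den"
  proof -
    have "gcore.neta (f e) 1 = (\<integral>x. (resid \<rho> \<gamma> e (\<sigma> * x))\<^sup>2 \<partial>stdN)" for e
      unfolding neta_eq by (subst integral_N2_fst[symmetric]) (measurable, simp add: power2_eq_square)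
    then have "Num 1 = (\<integral>e. (\<integral>x. (resid \<rho> \<gamma> e (\<sigma> * x))\<^sup>2 \<partial>stdN) \<partial>Pe)" by (simp add: NumG)
    also have "\<dots> = Den" unfolding Den_def
    proof (rule double_fub[OF Pe(1), symmetric])
      show "integrable (stdN \<Otimes>\<^sub>M Pe) (\<lambda>(g, e). (resid \<rho> \<gamma> e (\<sigma> * g))\<^sup>2)"
        by (rule SP.P.integrable_const_bound[where B="\<gamma> * \<gamma>"])
           (use rb3 in \<open>auto intro!: AE_I2 simp: case_prod_unfold\<close>)
    qed
    finally show ?thesis .
  qed
  have Num0: "0 \<le> Num 0"
    unfolding NumG using gcore.neta_zero[OF GC] by (intro Bochner_Integration.integral_nonneg) simp
  define F where "F = Ffun Pe \<rho> q \<sigma> \<gamma>"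
  have FmL: "F a \<le> F b \<and> F b - F a \<le> q * (b - a)" if ab: "-1 \<le> a" "a \<le> b" "b \<le> 1" for a b
  proof -
    have m: "Num a \<le> Num b" "Num b - Num a \<le> (b - a) * Den" using mainineq[OF ab] by auto
    have "F a \<le> F b" unfolding F_def Fdef using m(1) q Den_pos
      by (intro divide_right_mono mult_left_mono) auto
    moreover have "F b - F a = q * ((Num b - Num a) / Den)" unfolding F_def Fdef using Den_pos by (simp add: field_simps)
    moreover have "(Num b - Num a) / Den \<le> b - a" using m(2) Den_pos by (simp add: divide_le_eq)
    moreover have "q * ((Num b - Num a) / Den) \<le> q * (b - a)"
      using q \<open>(Num b - Num a) / Den \<le> b - a\<close> by (intro mult_left_mono) auto
    ultimately show ?thesis by linarith
  qed
  have F1: "F 1 = q" unfolding F_def Fdef Num1 using Den_pos by simp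
  have F0: "0 \<le> F 0" unfolding F_def Fdef using Num0 q Den_pos by simp
  have Flip: "\<bar>F x - F y\<bar> \<le> q * \<bar>x - y\<bar>" if "x \<in> {-1..1}" "y \<in> {-1..1}" for x y
  proof (cases "x \<le> y")
    case True
    then show ?thesis using FmL[of x y] that by (simp add: abs_if)
  next
    case False
    then show ?thesis using FmL[of y x] that by (simp add: abs_if)
  qed
  have Fcont: "continuous_on {-1..1} F"
  proof (rule lipschitz_on_continuous_on[where L=q], rule lipschitz_onI)
    fix x y :: real assume "x \<in> {-1..1}" "y \<in> {-1..1}"
    then show "dist (F x) (F y) \<le> q * dist x y" using Flip by (simp add: dist_real_def)
  qed (use q in simp)
  have ex: "\<exists>\<eta>. \<eta> \<in> {-1..1} \<and> F \<eta> = \<eta>"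
  proof -
    have c: "continuous_on {-1..1} (\<lambda>x. F x - x)" by (intro continuous_intros Fcont)
    have "F 0 - F (-1) \<le> q" using FmL[of "-1" 0] by simp
    then have a: "0 \<le> F (-1) - (-1)" using F0 q by simp
    have b: "F 1 - 1 \<le> 0" using F1 q by simp
    from IVT2'[of "\<lambda>x. F x - x" 1 0 "-1", OF b a _ c] show ?thesis by auto
  qed
  have un: "x = y" if "x \<in> {-1..1}" "y \<in> {-1..1}" "F x = x" "F y = y" for x y
  proof -
    have "\<bar>x - y\<bar> \<le> q * \<bar>x - y\<bar>" using Flip[OF that(1,2)] that(3,4) by simp
    then have "(1 - q) * \<bar>x - y\<bar> \<le> 0" by (simp add: algebra_simps)
    then have "\<bar>x - y\<bar> \<le> 0" using q by (simp add: mult_le_0_iff)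
    then show ?thesis by simp
  qed
  have loc: "\<eta> \<in> {0..q}" if "\<eta> \<in> {-1..1}" "F \<eta> = \<eta>" for \<eta>
  proof -
    have "\<eta> \<le> q" using FmL[of \<eta> 1] that F1 by auto
    moreover have "0 \<le> \<eta>"
    proof (rule ccontr)
      assume "\<not> 0 \<le> \<eta>"
      then have n: "\<eta> < 0" by simp
      have "F 0 - F \<eta> \<le> q * (0 - \<eta>)" using FmL[of \<eta> 0] that n by auto
      then have "0 \<le> \<eta> - q * \<eta>" using F0 that by simp
      then have "0 \<le> (1 - q) * \<eta>" by (simp add: algebra_simps)
      then have "0 \<le> \<eta>" using q by (simp add: zero_le_mult_iff)
      then show False using n by simp
    qed
    ultimately show ?thesis by simp
  qed
  have F0q: "F 0 \<le> q" using FmL[of 0 1] F1 by simp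
  show ?thesis
    unfolding F_def[symmetric]
  proof (intro conjI)
    show "mono_on {-1..1} F" by (rule mono_onI) (use FmL in auto)
    show "\<forall>x\<in>{-1..1}. \<forall>y\<in>{-1..1}. \<bar>F x - F y\<bar> \<le> q * \<bar>x - y\<bar>" using Flip by blast
    show "0 \<le> F 0" by (rule F0)
    show "F 0 \<le> q" by (rule F0q)
    show "q \<le> 1" using q by simp
    show "F 1 = q" by (rule F1)
    show "\<exists>!\<eta>. \<eta> \<in> {-1..1} \<and> F \<eta> = \<eta>" using ex un by blast
    show "\<forall>\<eta>\<in>{-1..1}. F \<eta> = \<eta> \<longrightarrow> \<eta> \<in> {0..q}" using loc by blast
  qed
qed


end
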